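(* Let $\mathcal V$ be a multivector field on $X$ and let $C\subset X$ be a strongly connected component of the digraph $G_{\mathcal V}$ such that there exists an essential full solution with image contained in $C$. Then $C$ is an isolated invariant set.
   Context: $X$ is a finite $T_0$ topological space. For $A\subset X$, $\operatorname{cl}A$ is its closure and $\operatorname{mo}A:=\operatorname{cl}A\setminus A$. $A$ is locally closed if it is the intersection of an open and a closed subset of $X$. $H$ denotes relative singular homology. A multivector is a nonempty locally closed subset of $X$; a multivector field $\mathcal V$ on $X$ is a partition of $X$ into multivectors. For $x\in X$, $[x]$ denotes the element of $\mathcal V$ containing $x$. A multivector $V$ is critical if $H(\operatorname{cl}V,\operatorname{mo}V)\neq0$, regular otherwise. Put $\Pi_{\mathcal V}(x):=[x]\cup\operatorname{cl}\{x\}$ and $\Pi_{\mathcal V}(A):=\bigcup_{x\in A}\Pi_{\mathcal V}(x)$. $G_{\mathcal V}$ is the digraph with vertex set $X$ and an edge $x\to y$ iff $y\in\Pi_{\mathcal V}(x)$; its strongly connected components are the equivalence classes of the relation "there is a directed path from $x$ to $y$ and from $y$ to $x$". A $\mathbb Z$-interval is $\mathbb Z\cap I$ for a real interval $I$. A solution in $A\subset X$ is a map $\varphi:D\to A$ on a $\mathbb Z$-interval $D$ with $\varphi(i+1)\in\Pi_{\mathcal V}(\varphi(i))$ whenever $i,i+1\in D$; it is full if $D=\mathbb Z$, and a path if $D$ is bounded, its endpoints being $\varphi(\min D)$ and $\varphi(\max D)$. A full solution $\varphi$ is essential if for every $t\in\mathbb Z$ with $[\varphi(t)]$ regular, the set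 $\{s\in\mathbb Z:\varphi(s)\notin[\varphi(t)]\}$ is unbounded below and unbounded above. $\operatorname{Inv}A$ is the set of $x\in A$ such that there is an essential full solution $\varphi$ with image in $A$ and $\varphi(0)=x$; $A$ is invariant if $\operatorname{Inv}A=A$. A closed set $N$ isolates an invariant set $S\subset N$ if (a) every path in $N$ with both endpoints in $S$ has image contained in $S$, and (b) $\Pi_{\mathcal V}(S)\subset N$. An invariant set is an isolated invariant set if some closed set isolates it. *)

theory Defs
  imports "HOL-Analysis.Analysis" "HOL-Homology.Homology"
begin

definition locally_closed :: "'a topology \<Rightarrow> 'a set \<Rightarrow> bool" where
  "locally_closed X A \<longleftrightarrow> (\<exists>U C. openin X U \<and> closedin X C \<and> A = U \<inter> C)"

definition mouth :: "'a topology \<Rightarrow> 'a set \<Rightarrow> 'a set" where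
  "mouth X A = X closure_of A - A"

definition multivector :: "'a topology \<Rightarrow> 'a set \<Rightarrow> bool" where
  "multivector X A \<longleftrightarrow> A \<noteq> {} \<and> locally_closed X A"

definition multivector_field :: "'a topology \<Rightarrow> 'a set set \<Rightarrow> bool" where
  "multivector_field X V \<longleftrightarrow>
     (\<forall>A\<in>V. multivector X A) \<and> \<Union>V = topspace X \<and>
     (\<forall>A\<in>V. \<forall>B\<in>V. A \<noteq> B \<longrightarrow> A \<inter> B = {})"

definition mvclass :: "'a set set \<Rightarrow> 'a \<Rightarrow> 'a set" where
  "mvclass V x = (THE A. A \<in> V \<and> x \<in> A)"

definition critical :: "'a topology \<Rightarrow> 'a set \<Rightarrow> bool" where
  "critical X A \<longleftrightarrow>
     (\<exists>p. \<not> trivial_group (relative_homology_group p (subtopology X (X closure_of A)) (mouth X A)))"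

definition regular :: "'a topology \<Rightarrow> 'a set \<Rightarrow> bool" where
  "regular X A \<longleftrightarrow> \<not> critical X A"

definition PiV :: "'a topology \<Rightarrow> 'a set set \<Rightarrow> 'a \<Rightarrow> 'a set" where
  "PiV X V x = mvclass V x \<union> X closure_of {x}"

definition PiV_set :: "'a topology \<Rightarrow> 'a set set \<Rightarrow> 'a set \<Rightarrow> 'a set" where
  "PiV_set X V A = (\<Union>x\<in>A. PiV X V x)"

definition GV_edges :: "'a topology \<Rightarrow> 'a set set \<Rightarrow> ('a \<times> 'a) set" where
  "GV_edges X V = {(x, y). x \<in> topspace X \<and> y \<in> topspace X \<and> y \<in> PiV X V x}"

definition strongly_connected_component :: "'a topology \<Rightarrow> 'a set set \<Rightarrow> 'a set \<Rightarrow> bool" where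
  "strongly_connected_component X V C \<longleftrightarrow>
     (\<exists>x\<in>topspace X. C = {y \<in> topspace X. (x, y) \<in> (GV_edges X V)\<^sup>* \<and> (y, x) \<in> (GV_edges X V)\<^sup>*})"

definition full_solution :: "'a topology \<Rightarrow> 'a set set \<Rightarrow> (int \<Rightarrow> 'a) \<Rightarrow> bool" where
  "full_solution X V \<phi> \<longleftrightarrow> (\<forall>i. \<phi> (i + 1) \<in> PiV X V (\<phi> i))"

definition essential_solution :: "'a topology \<Rightarrow> 'a set set \<Rightarrow> (int \<Rightarrow> 'a) \<Rightarrow> bool" where
  "essential_solution X V \<phi> \<longleftrightarrow> full_solution X V \<phi> \<and>
     (\<forall>t. regular X (mvclass V (\<phi> t)) \<longrightarrow>
        (\<forall>n. \<exists>s\<le>n. \<phi> s \<notin> mvclass V (\<phi> t)) \<and>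
        (\<forall>n. \<exists>s\<ge>n. \<phi> s \<notin> mvclass V (\<phi> t)))"

definition Inv :: "'a topology \<Rightarrow> 'a set set \<Rightarrow> 'a set \<Rightarrow> 'a set" where
  "Inv X V A = {x \<in> A. \<exists>\<phi>. essential_solution X V \<phi> \<and> range \<phi> \<subseteq> A \<and> \<phi> 0 = x}"

definition invariant :: "'a topology \<Rightarrow> 'a set set \<Rightarrow> 'a set \<Rightarrow> bool" where
  "invariant X V A \<longleftrightarrow> Inv X V A = A"

text \<open>A path is a solution on a nonempty bounded Z-interval {a..b}.\<close>
definition isolates :: "'a topology \<Rightarrow> 'a set set \<Rightarrow> 'a set \<Rightarrow> 'a set \<Rightarrow> bool" where
  "isolates X V N S \<longleftrightarrow> closedin X N \<and> S \<subseteq> N \<and>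
     (\<forall>\<phi> (a::int) b. a \<le> b \<and> (\<forall>i. a \<le> i \<and> i < b \<longrightarrow> \<phi> (i + 1) \<in> PiV X V (\<phi> i)) \<and>
        \<phi> ` {a..b} \<subseteq> N \<and> \<phi> a \<in> S \<and> \<phi> b \<in> S \<longrightarrow> \<phi> ` {a..b} \<subseteq> S) \<and>
     PiV_set X V S \<subseteq> N"

definition isolated_invariant_set :: "'a topology \<Rightarrow> 'a set set \<Rightarrow> 'a set \<Rightarrow> bool" where
  "isolated_invariant_set X V S \<longleftrightarrow> invariant X V S \<and> (\<exists>N. isolates X V N S)"

end

theory Submission
  imports Defs
begin

lemma mvclass_eq:
  assumes "multivector_field X V" "A \<in> V" "x \<in> A"
  shows "mvclass V x = A"
  unfolding mvclass_def
proof (rule the_equality)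
  show "A \<in> V \<and> x \<in> A" using assms by blast
next
  fix B assume "B \<in> V \<and> x \<in> B"
  then show "B = A" using assms unfolding multivector_field_def by blast
qed

lemma mvclass_mem:
  assumes "multivector_field X V" "x \<in> topspace X"
  shows "mvclass V x \<in> V \<and> x \<in> mvclass V x"
proof -
  obtain A where "A \<in> V" "x \<in> A" using assms unfolding multivector_field_def by blast
  then show ?thesis using mvclass_eq[OF assms(1)] by simp
qed

lemma mvclass_sub:
  assumes "multivector_field X V" "x \<in> topspace X"
  shows "mvclass V x \<subseteq> topspace X"
  using mvclass_mem[OF assms] assms(1) unfolding multivector_field_def by blast

lemma rtr_top:
  assumes "(a, b) \<in> (GV_edges X V)\<^sup>*" "a \<in> topspace X"
  shows "b \<in> topspace X"
  using assms by (induction rule: rtrancl_induct) (auto simp: GV_edges_def)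

lemma chain_rtr:
  assumes "\<And>k. k < p \<Longrightarrow> (h k, h (Suc k)) \<in> R" "i \<le> j" "j \<le> p"
  shows "(h i, h j) \<in> R\<^sup>*"
  using assms(2,3)
proof (induction j)
  case 0 then show ?case by simp
next
  case (Suc j)
  show ?case
  proof (cases "i = Suc j")
    case True then show ?thesis by simp
  next
    case False
    then have "(h i, h j) \<in> R\<^sup>*" using Suc by simp
    moreover have "(h j, h (Suc j)) \<in> R" using assms(1) Suc by simp
    ultimately show ?thesis by simp
  qed
qed

lemma int_chain_rtr:
  fixes \<phi> :: "int \<Rightarrow> 'a"
  assumes "\<And>k. i \<le> k \<Longrightarrow> k < b \<Longrightarrow> (\<phi> k, \<phi> (k + 1)) \<in> R" "i \<le> j" "j \<le> b"
  shows "(\<phi> i, \<phi> j) \<in> R\<^sup>*"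
  using assms(2,3)
proof (induction j rule: int_ge_induct)
  case base then show ?case by simp
next
  case (step j)
  then have "(\<phi> i, \<phi> j) \<in> R\<^sup>*" by simp
  moreover have "(\<phi> j, \<phi> (j+1)) \<in> R" using assms(1) step by simp
  ultimately show ?case by simp
qed

lemma mod_succ:
  fixes t p :: int
  assumes "p > 0"
  shows "(t + 1) mod p = (if t mod p + 1 = p then 0 else t mod p + 1)"
proof -
  have r: "0 \<le> t mod p" "t mod p < p" using assms by auto
  have "(t + 1) mod p = (t mod p + 1) mod p" by (simp add: mod_add_left_eq)
  then show ?thesis using r by (auto simp: mod_pos_pos_trivial)
qed

lemma mod_lin:
  fixes p k c :: int
  assumes "0 \<le> c" "c < p"
  shows "(p * k + c) mod p = c"
  using assms by (simp add: mod_pos_pos_trivial)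

theorem theorem4p15:
  fixes X :: "'a topology" and V :: "'a set set" and C :: "'a set"
  assumes "finite (topspace X)"
    and "t0_space X"
    and "multivector_field X V"
    and "strongly_connected_component X V C"
    and "\<exists>\<phi>. essential_solution X V \<phi> \<and> range \<phi> \<subseteq> C"
  shows "isolated_invariant_set X V C"
proof -
  let ?E = "GV_edges X V"
  have mvf: "multivector_field X V" by fact
  obtain x0 where x0: "x0 \<in> topspace X"
    and Cdef: "C = {y \<in> topspace X. (x0, y) \<in> ?E\<^sup>* \<and> (y, x0) \<in> ?E\<^sup>*}"
    using assms(4) unfolding strongly_connected_component_def by (rule bexE)
  have Ctop: "C \<subseteq> topspace X" using Cdef by blast
  have Cconn: "(a, b) \<in> ?E\<^sup>*" if "a \<in> C" "b \<in> C" for a b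
  proof -
    have "(a, x0) \<in> ?E\<^sup>*" "(x0, b) \<in> ?E\<^sup>*" using that Cdef by auto
    then show ?thesis by (rule rtrancl_trans)
  qed
  have Cin: "z \<in> C" if "a \<in> C" "(a, z) \<in> ?E\<^sup>*" "(z, a) \<in> ?E\<^sup>*" for a z
  proof -
    have at: "a \<in> topspace X" using Ctop that(1) by (rule subsetD)
    have zt: "z \<in> topspace X" by (rule rtr_top[OF that(2) at])
    have xa: "(x0, a) \<in> ?E\<^sup>*" and ax: "(a, x0) \<in> ?E\<^sup>*" using that(1) by (simp_all add: Cdef)
    have "(x0, z) \<in> ?E\<^sup>*" using xa that(2) by (rule rtrancl_trans)
    moreover have "(z, x0) \<in> ?E\<^sup>*" using that(3) ax by (rule rtrancl_trans)
    ultimately show ?thesis using zt by (simp add: Cdef)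
  qed
  have edge: "(a, b) \<in> ?E" if "a \<in> topspace X" "b \<in> topspace X" "b \<in> PiV X V a" for a b
    using that unfolding GV_edges_def by simp
  have PiV_top: "PiV X V a \<subseteq> topspace X" if "a \<in> topspace X" for a
    unfolding PiV_def using mvclass_sub[OF mvf that] closure_of_subset_topspace[of X "{a}"] by (rule Un_least)
  have iso: "isolates X V (topspace X) C"
    unfolding isolates_def
  proof (intro conjI allI impI)
    show "closedin X (topspace X)" by simp
    show "C \<subseteq> topspace X" by fact
    show "PiV_set X V C \<subseteq> topspace X"
      unfolding PiV_set_def using PiV_top Ctop by blast
  next
    fix \<phi> :: "int \<Rightarrow> 'a" and a b :: int
    assume H: "a \<le> b \<and> (\<forall>i. a \<le> i \<and> i < b \<longrightarrow> \<phi> (i + 1) \<in> PiV X V (\<phi> i)) \<and>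
        \<phi> ` {a..b} \<subseteq> topspace X \<and> \<phi> a \<in> C \<and> \<phi> b \<in> C"
    have st: "(\<phi> k, \<phi> (k + 1)) \<in> ?E" if "a \<le> k" "k < b" for k
      using H that by (intro edge) auto
    show "\<phi> ` {a..b} \<subseteq> C"
    proof
      fix z assume "z \<in> \<phi> ` {a..b}"
      then obtain i where i: "a \<le> i" "i \<le> b" "z = \<phi> i" by auto
      have 1: "(\<phi> a, \<phi> i) \<in> ?E\<^sup>*" using int_chain_rtr[of a b \<phi> ?E i] st i by auto
      have 2: "(\<phi> i, \<phi> b) \<in> ?E\<^sup>*" using int_chain_rtr[of i b \<phi> ?E b] st i by auto
      have "(\<phi> b, \<phi> a) \<in> ?E\<^sup>*" using Cconn H by blast
      then have "(\<phi> i, \<phi> a) \<in> ?E\<^sup>*" using 2 by simp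
      then show "z \<in> C" using Cin[of "\<phi> a" z] H 1 i by auto
    qed
  qed
  have "C \<subseteq> Inv X V C"
  proof
    fix x assume xC: "x \<in> C"
    have xt: "x \<in> topspace X" using xC Ctop by blast
    show "x \<in> Inv X V C"
    proof (cases "\<exists>y\<in>C. mvclass V y \<noteq> mvclass V x")
      case False
      have crit: "\<not> regular X (mvclass V x)"
      proof
        assume reg: "regular X (mvclass V x)"
        obtain \<phi> where ph: "essential_solution X V \<phi>" "range \<phi> \<subseteq> C" using assms(5) by blast
        have e: "mvclass V (\<phi> s) = mvclass V x" for s using False ph(2) by auto
        then obtain s where "\<phi> s \<notin> mvclass V (\<phi> 0)"
          using ph(1) reg unfolding essential_solution_def by metis
        moreover have "\<phi> s \<in> mvclass V (\<phi> s)" using mvclass_mem[OF mvf] ph(2) Ctop by blast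
        ultimately show False using e by simp
      qed
      have "essential_solution X V (\<lambda>_. x)"
        unfolding essential_solution_def full_solution_def PiV_def
        using crit mvclass_mem[OF mvf xt] by auto
      then show ?thesis unfolding Inv_def using xC by auto
    next
      case True
      then obtain y where yC: "y \<in> C" and neq: "mvclass V y \<noteq> mvclass V x" by blast
      have xy: "x \<noteq> y" using neq by auto
      obtain n f where f: "f 0 = x" "f n = y" "\<And>i. i < n \<Longrightarrow> (f i, f (Suc i)) \<in> ?E"
        using Cconn[OF xC yC] unfolding rtrancl_power relpow_fun_conv by blast
      obtain m g where g: "g 0 = y" "g m = x" "\<And>i. i < m \<Longrightarrow> (g i, g (Suc i)) \<in> ?E"
        using Cconn[OF yC xC] unfolding rtrancl_power relpow_fun_conv by blast
      have n1: "n \<ge> 1" using f xy by (cases n) auto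
      have m1: "m \<ge> 1" using g xy by (cases m) auto
      define h where "h k = (if k \<le> n then f k else g (k - n))" for k
      define p where "p = n + m"
      have h0: "h 0 = x" using f by (simp add: h_def)
      have hn: "h n = y" using f by (simp add: h_def)
      have hp: "h p = x" using g m1 by (simp add: h_def p_def)
      have hstep: "(h k, h (Suc k)) \<in> ?E" if "k < p" for k
      proof (cases "k < n")
        case True then show ?thesis using f by (simp add: h_def)
      next
        case False
        then have "k - n < m" "Suc k - n = Suc (k - n)" using that p_def by auto
        then show ?thesis using g False f
          by (cases "k = n") (auto simp: h_def)
      qed
      have hC: "h k \<in> C" if "k \<le> p" for k
      proof -
        have "(h 0, h k) \<in> ?E\<^sup>*" using chain_rtr[of p h ?E 0 k] hstep that by auto
        moreover have "(h k, h p) \<in> ?E\<^sup>*" using chain_rtr[of p h ?E k p] hstep that by auto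
        ultimately show ?thesis using Cin[OF xC] h0 hp by simp
      qed
      have pp: "(0::int) < int p" using n1 p_def by simp
      define \<psi> where "\<psi> t = h (nat (t mod int p))" for t
      have psi_lin: "\<psi> (int p * k + int c) = h c" if "c < p" for k c
        using mod_lin[of "int c" "int p" k] that by (simp add: \<psi>_def)
      have psiC: "\<psi> t \<in> C" for t
        unfolding \<psi>_def using pp by (intro hC) (simp add: nat_le_iff order.strict_implies_order)
      have full: "full_solution X V \<psi>"
        unfolding full_solution_def
      proof
        fix t
        define k where "k = nat (t mod int p)"
        have kp: "k < p" using pp by (simp add: k_def nat_less_iff)
        have "(\<psi> t, \<psi> (t + 1)) \<in> ?E"
        proof (cases "t mod int p + 1 = int p")
          case True
          have m0: "(t + 1) mod int p = 0" using mod_succ[OF pp, of t] True by simp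
          have "\<psi> (t+1) = h 0" unfolding \<psi>_def m0 by simp
          also have "\<dots> = h p" using h0 hp by simp
          also have "p = Suc k"
          proof -
            have "0 \<le> t mod int p" using pp by simp
            then have "int k = t mod int p" by (simp add: k_def)
            then show ?thesis using True by linarith
          qed
          finally have "\<psi> (t+1) = h (Suc k)" .
          then show ?thesis using hstep[OF kp] by (simp add: \<psi>_def k_def)
        next
          case False
          have m1': "(t + 1) mod int p = t mod int p + 1" using mod_succ[OF pp, of t] False by simp
          have "0 \<le> t mod int p" using pp by simp
          then have "nat (t mod int p + 1) = Suc k" by (simp add: k_def nat_add_distrib)
          then have "\<psi> (t+1) = h (Suc k)" unfolding \<psi>_def m1' by simp
          then show ?thesis using hstep[OF kp] by (simp add: \<psi>_def k_def)
        qed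
        then show "\<psi> (t + 1) \<in> PiV X V (\<psi> t)" by (simp add: GV_edges_def)
      qed
      have ess: "essential_solution X V \<psi>"
        unfolding essential_solution_def
      proof (intro conjI full allI impI)
        fix t N :: int
        let ?A = "mvclass V (\<psi> t)"
        have AV: "?A \<in> V" using mvclass_mem[OF mvf] psiC Ctop by blast
        obtain c where c: "c < p" "h c \<notin> ?A"
        proof (cases "x \<in> ?A")
          case True
          have "y \<notin> ?A"
          proof
            assume "y \<in> ?A"
            then show False using True neq mvclass_eq[OF mvf AV] by simp
          qed
          then show ?thesis using that[of n] hn m1 p_def by simp
        next
          case False then show ?thesis using that[of 0] h0 pp by simp
        qed
        show "\<exists>s\<le>N. \<psi> s \<notin> ?A"
        proof (intro exI conjI)
          show "\<psi> (int p * (- (\<bar>N\<bar> + int p)) + int c) \<notin> ?A" using psi_lin c by simp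
          have "0 \<le> (int p - 1) * (\<bar>N\<bar> + int p)" using pp by (intro mult_nonneg_nonneg) auto
          then have "int p * (- (\<bar>N\<bar> + int p)) \<le> - (\<bar>N\<bar> + int p)" by (simp add: algebra_simps)
          then show "int p * (- (\<bar>N\<bar> + int p)) + int c \<le> N" using c by linarith
        qed
        show "\<exists>s\<ge>N. \<psi> s \<notin> ?A"
        proof (intro exI conjI)
          show "\<psi> (int p * \<bar>N\<bar> + int c) \<notin> ?A" using psi_lin c by simp
          have "0 \<le> (int p - 1) * \<bar>N\<bar>" using pp by (intro mult_nonneg_nonneg) auto
          then have "\<bar>N\<bar> \<le> int p * \<bar>N\<bar>" by (simp add: algebra_simps)
          then show "N \<le> int p * \<bar>N\<bar> + int c" by linarith
        qed
      qed
      have "\<psi> 0 = x" using h0 by (simp add: \<psi>_def)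
      then show ?thesis unfolding Inv_def using xC ess psiC by auto
    qed
  qed
  then have "invariant X V C" unfolding invariant_def Inv_def by auto
  then show ?thesis unfolding isolated_invariant_set_def using iso by blast
qed

end
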